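(* In the setting described in the context, let $\langle s_m, s_{m+1},\ldots,s_{m+L}\rangle$ be a state subsequence, each state constituting one generation $G_1,\ldots,G_L$ of reproducing entities, where (reproduction being without epigenetic development) the size $|G_i|$ of a generation is obtained by enumerating the reproduction instances $(p,c)$ with $p\in E_s$, $c\in E_{s+1}$, $(p,c)\in C$, $(p,c)\in\Delta$ and no $e''\in E_s$ with $(e'',c)\in R$. Given the sets of entities in each state, the worst-case number of steps (RAM model) to observe fecundity, i.e. to compute these generation sizes and decide whether for every $i<L$ there is $j>i$ with $|G_j|\ge|G_i|$, is $O\!\left(L2^{2n}\max\{t_c,\ t_\Delta,\ t_{\delta_{mut}},\ L/2^{2n}\}\right)$.
   Context: A run is a sequence of states, each a finite multiset of atomic elements of size $O(n)$. For each state $s$ an observer has fixed a finite set $E_s$ of entities, each a sub-multiset of $s$, tagged so that distinct entities are distinguishable (entities of different states are distinct objects); hence $|E_s|\le 2^n$. Let $E_T$ be the disjoint union of all $E_s$. The observer fixes: a recognition relation $R\subseteq E_T\times E_T$, a partial injective function with $(e,e')\in R$ only if $e\in E_s$, $e'\in E_{s+1}$ for some state $s$ ($s+1$ denoting the next state); a causal relation $C\subseteq E_T\times E_T$ with $(e,e')\in C$ only if $e\in E_s$, $e'\in E_{s+1}$; and a relation $\Delta\subseteq E_T\times E_T$ such that $(e,e')\in\Delta$ implies $e$ lies in an earlier state than $e'$ and $(e,e')\notin R$. Deciding membership of a given pair in $C$, $\Delta$, $R$ takes at most $t_c$, $t_\Delta$, $t_{\delta_{mut}}$ steps respectively. *)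

theory Defs
  imports Complex_Main
begin

text \<open>
  Entities are elements of an abstract type 'e; E s is the (duplicate-free) list
  enumerating the entity set E_s given to the observer; st e is the state an entity
  lies in.  The relations R, C, Delta are membership oracles whose queries cost
  tR, tC, tD steps respectively (tR plays the role of t_delta_mut).
  Algorithms are written with explicit RAM-step accounting: each function returns
  a pair (result, number of steps).  Every oracle query is charged its full cost,
  every loop iteration / comparison / increment is charged one unit.
\<close>

definition repro_instance ::
  "(nat \<Rightarrow> 'e list) \<Rightarrow> ('e \<Rightarrow> 'e \<Rightarrow> bool) \<Rightarrow> ('e \<Rightarrow> 'e \<Rightarrow> bool) \<Rightarrow> ('e \<Rightarrow> 'e \<Rightarrow> bool)
    \<Rightarrow> nat \<Rightarrow> 'e \<Rightarrow> 'e \<Rightarrow> bool" where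
  "repro_instance E R C D s p c \<longleftrightarrow>
     p \<in> set (E s) \<and> c \<in> set (E (Suc s)) \<and> C p c \<and> D p c \<and>
     \<not> (\<exists>e''\<in>set (E s). R e'' c)"

text \<open>Size of generation G_i (i = 1..L) of the subsequence s_m, ..., s_(m+L):
  reproduction instances from state m+i-1 to state m+i.\<close>
definition gen_size ::
  "(nat \<Rightarrow> 'e list) \<Rightarrow> ('e \<Rightarrow> 'e \<Rightarrow> bool) \<Rightarrow> ('e \<Rightarrow> 'e \<Rightarrow> bool) \<Rightarrow> ('e \<Rightarrow> 'e \<Rightarrow> bool)
    \<Rightarrow> nat \<Rightarrow> nat \<Rightarrow> nat" where
  "gen_size E R C D m i = card {(p, c). repro_instance E R C D (m + i - 1) p c}"

definition fecund :: "(nat \<Rightarrow> nat) \<Rightarrow> nat \<Rightarrow> bool" where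
  "fecund g L \<longleftrightarrow> (\<forall>i. 1 \<le> i \<and> i < L \<longrightarrow> (\<exists>j. i < j \<and> j \<le> L \<and> g j \<ge> g i))"

definition recog_scan :: "('e \<Rightarrow> 'e \<Rightarrow> bool) \<Rightarrow> nat \<Rightarrow> 'e list \<Rightarrow> 'e \<Rightarrow> bool \<times> nat" where
  "recog_scan R tR ps c =
     fold (\<lambda>e (b, k). (b \<or> R e c, k + tR + 1)) ps (False, 1)"

definition recog_flags ::
  "('e \<Rightarrow> 'e \<Rightarrow> bool) \<Rightarrow> nat \<Rightarrow> 'e list \<Rightarrow> 'e list \<Rightarrow> ('e \<times> bool) list \<times> nat" where
  "recog_flags R tR ps cs =
     fold (\<lambda>c (fl, k). let (b, k') = recog_scan R tR ps c in (fl @ [(c, b)], k + k' + 1))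
       cs ([], 1)"

definition count_gen ::
  "('e \<Rightarrow> 'e \<Rightarrow> bool) \<Rightarrow> ('e \<Rightarrow> 'e \<Rightarrow> bool) \<Rightarrow> ('e \<Rightarrow> 'e \<Rightarrow> bool) \<Rightarrow> nat \<Rightarrow> nat \<Rightarrow> nat
    \<Rightarrow> 'e list \<Rightarrow> 'e list \<Rightarrow> nat \<times> nat" where
  "count_gen R C D tR tC tD ps cs =
     (let (fl, k0) = recog_flags R tR ps cs in
      fold (\<lambda>p (n, k).
              fold (\<lambda>(c, f) (n', k'').
                      (if C p c \<and> D p c \<and> \<not> f then n' + 1 else n', k'' + tC + tD + 2))
                fl (n, k + 1))
        ps (0, k0 + 1))"

definition gen_sizes ::
  "(nat \<Rightarrow> 'e list) \<Rightarrow> ('e \<Rightarrow> 'e \<Rightarrow> bool) \<Rightarrow> ('e \<Rightarrow> 'e \<Rightarrow> bool) \<Rightarrow> ('e \<Rightarrow> 'e \<Rightarrow> bool)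
    \<Rightarrow> nat \<Rightarrow> nat \<Rightarrow> nat \<Rightarrow> nat \<Rightarrow> nat \<Rightarrow> nat list \<times> nat" where
  "gen_sizes E R C D tR tC tD m L =
     fold (\<lambda>i (gs, k). let (g, k') = count_gen R C D tR tC tD (E (m + i - 1)) (E (m + i))
                        in (gs @ [g], k + k' + 1))
       [1..<L + 1] ([], 1)"

text \<open>Naive double-loop fecundity check on the list gs (gs ! (i-1) = |G_i|).\<close>
definition fecund_check :: "nat list \<Rightarrow> bool \<times> nat" where
  "fecund_check gs =
     (let L = length gs in
      fold (\<lambda>i (b, k).
              let (ex, k') = fold (\<lambda>j (e, k''). (e \<or> gs ! (j - 1) \<ge> gs ! (i - 1), k'' + 1))
                               [i + 1..<L + 1] (False, 1)
              in (b \<and> ex, k + k' + 1))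
        [1..<L] (True, 1))"

definition observe_fecundity ::
  "(nat \<Rightarrow> 'e list) \<Rightarrow> ('e \<Rightarrow> 'e \<Rightarrow> bool) \<Rightarrow> ('e \<Rightarrow> 'e \<Rightarrow> bool) \<Rightarrow> ('e \<Rightarrow> 'e \<Rightarrow> bool)
    \<Rightarrow> nat \<Rightarrow> nat \<Rightarrow> nat \<Rightarrow> nat \<Rightarrow> nat \<Rightarrow> (nat list \<times> bool) \<times> nat" where
  "observe_fecundity E R C D tR tC tD m L =
     (let (gs, k1) = gen_sizes E R C D tR tC tD m L;
          (b, k2) = fecund_check gs
      in ((gs, b), k1 + k2))"

end

theory Submission
  imports Defs
begin


lemma scan_fold: "fold (\<lambda>e (b, k). (b \<or> R e c, k + tR + 1)) ps (b, k) =
  (b \<or> (\<exists>e\<in>set ps. R e c), k + length ps * (tR + 1))"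
  by (induction ps arbitrary: b k) auto

lemma recog_scan_eq: "recog_scan R tR ps c = ((\<exists>e\<in>set ps. R e c), 1 + length ps * (tR + 1))"
  unfolding recog_scan_def scan_fold by simp

lemma flags_fold: "fold (\<lambda>c (fl, k). let (b, k') = recog_scan R tR ps c in (fl @ [(c, b)], k + k' + 1)) cs (fl, k)
  = (fl @ map (\<lambda>c. (c, \<exists>e\<in>set ps. R e c)) cs, k + length cs * (2 + length ps * (tR + 1)))"
  by (induction cs arbitrary: fl k) (auto simp: recog_scan_eq)

lemma recog_flags_eq: "recog_flags R tR ps cs = (map (\<lambda>c. (c, \<exists>e\<in>set ps. R e c)) cs, 1 + length cs * (2 + length ps * (tR + 1)))"
  unfolding recog_flags_def flags_fold by simp

lemma inner_fold: "fold (\<lambda>(c, f) (n', k''). (if C p c \<and> D p c \<and> \<not> f then n' + 1 else n', k'' + tC + tD + 2)) fl (n, k)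
  = (n + length (filter (\<lambda>(c, f). C p c \<and> D p c \<and> \<not> f) fl), k + length fl * (tC + tD + 2))"
proof (induction fl arbitrary: n k)
  case (Cons x fl)
  obtain c f where x: "x = (c, f)" by (cases x)
  show ?case using Cons by (simp add: x)
qed simp

lemma outer_gen: assumes "\<And>p n k. g p (n, k) = (n + cnt p, k + (c::nat))"
  shows "fold (\<lambda>p (n, k). g p (n, k + 1)) ps (n, k) = (n + sum_list (map cnt ps), k + length ps * (1 + c))"
  by (induction ps arbitrary: n k) (simp_all add: assms algebra_simps)

lemma outer_fold: "fold (\<lambda>p (n, k). fold (\<lambda>(c, f) (n', k''). (if C p c \<and> D p c \<and> \<not> f then n' + 1 else n', k'' + tC + tD + 2)) fl (n, k + 1)) ps (n, k)
  = (n + sum_list (map (\<lambda>p. length (filter (\<lambda>(c, f). C p c \<and> D p c \<and> \<not> f) fl)) ps), k + length ps * (1 + length fl * (tC + tD + 2)))"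
    by (rule outer_gen[where g = "\<lambda>p. fold (\<lambda>(c, f) (n', k''). (if C p c \<and> D p c \<and> \<not> f then n' + 1 else n', k'' + tC + tD + 2)) fl"], rule inner_fold)

lemma count_gen_eq: "count_gen R C D tR tC tD ps cs =
  (sum_list (map (\<lambda>p. length (filter (\<lambda>c. C p c \<and> D p c \<and> \<not> (\<exists>e\<in>set ps. R e c)) cs)) ps),
   2 + length cs * (2 + length ps * (tR + 1)) + length ps * (1 + length cs * (tC + tD + 2)))"
  unfolding count_gen_def recog_flags_eq Let_def prod.case outer_fold by (simp add: filter_map o_def)

lemma count_val: assumes "distinct ps" "distinct cs"
  shows "sum_list (map (\<lambda>p. length (filter (\<lambda>c. C p c \<and> D p c \<and> \<not> (\<exists>e\<in>set ps. R e c)) cs)) ps)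
   = card {(p, c). p \<in> set ps \<and> c \<in> set cs \<and> C p c \<and> D p c \<and> \<not> (\<exists>e\<in>set ps. R e c)}"
proof -
  have "{(p, c). p \<in> set ps \<and> c \<in> set cs \<and> C p c \<and> D p c \<and> \<not> (\<exists>e\<in>set ps. R e c)}
     = Sigma (set ps) (\<lambda>p. set (filter (\<lambda>c. C p c \<and> D p c \<and> \<not> (\<exists>e\<in>set ps. R e c)) cs))" by auto
  then show ?thesis using assms
    by (simp add: card_SigmaI sum_list_distinct_conv_sum_set distinct_card[symmetric])
qed

lemma count_cost: fixes a b N T :: nat assumes "a \<le> N" "b \<le> N" "1 \<le> T" "tR \<le> T" "tC \<le> T" "tD \<le> T" "1 \<le> N"
  shows "2 + b * (2 + a * (tR + 1)) + a * (1 + b * (tC + tD + 2)) \<le> 11 * (N * N * T)"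
proof -
  have ab: "a * b \<le> N * N" using assms(1,2) by (rule mult_le_mono)
  have NT: "N \<le> N * N * T" using assms
    by (metis mult.right_neutral mult_le_mono le_trans mult_le_mono1 mult_1 mult_le_mono2)
  have 1: "1 \<le> N * N * T" using assms NT by linarith
  have "a * b * tR \<le> N * N * T" "a * b * tC \<le> N * N * T" "a * b * tD \<le> N * N * T"
    using ab assms by (simp_all add: mult_le_mono)
  moreover have "a * b \<le> N * N * T" using ab NT
    by (metis assms(3) le_trans mult.right_neutral mult_le_mono2)
  moreover have "2 + b * (2 + a * (tR + 1)) + a * (1 + b * (tC + tD + 2))
     = 2 + 2 * b + a + 3 * (a * b) + a * b * tR + a * b * tC + a * b * tD" by (simp add: algebra_simps)
  ultimately show ?thesis using assms NT 1 by linarith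
qed


lemma gen_fold: "fold (\<lambda>i (gs, k). let (g, k') = h i in (gs @ [g], k + k' + 1)) is (gs, k)
  = (gs @ map (\<lambda>i. fst (h i)) is, k + sum_list (map (\<lambda>i. snd (h i) + 1) is))"
  by (induction "is" arbitrary: gs k) (auto simp: case_prod_beta Let_def algebra_simps)

lemma fc_inner: "fold (\<lambda>j (e, k''). (e \<or> gs ! (j - 1) \<ge> gs ! (i - 1), k'' + 1)) js (e, k)
  = (e \<or> (\<exists>j\<in>set js. gs ! (j - 1) \<ge> gs ! (i - 1)), k + length js)"
  by (induction js arbitrary: e k) auto

lemma fc_gen: assumes "\<And>i. g i = (P i, (c i::nat))"
  shows "fold (\<lambda>i (b, k). let (ex, k') = g i in (b \<and> ex, k + k' + 1)) is (b, k)
    = (b \<and> (\<forall>i\<in>set is. P i), k + sum_list (map (\<lambda>i. c i + 1) is))"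
  by (induction "is" arbitrary: b k) (simp_all add: assms algebra_simps)

lemma fc_outer: "fold (\<lambda>i (b, k).
              let (ex, k') = fold (\<lambda>j (e, k''). (e \<or> gs ! (j - 1) \<ge> gs ! (i - 1), k'' + 1))
                               [i + 1..<L + 1] (False, 1)
              in (b \<and> ex, k + k' + 1)) is (b, k)
  = (b \<and> (\<forall>i\<in>set is. \<exists>j\<in>set [i + 1..<L + 1]. gs ! (j - 1) \<ge> gs ! (i - 1)),
     k + sum_list (map (\<lambda>i. 2 + length [i + 1..<L + 1]) is))"
  by (subst fc_gen[where g = "\<lambda>i. fold (\<lambda>j (e, k''). (e \<or> gs ! (j - 1) \<ge> gs ! (i - 1), k'' + 1))
                               [i + 1..<L + 1] (False, 1)", OF fc_inner]) simp

lemma sum_list_bound: "(\<And>i. i \<in> set xs \<Longrightarrow> f i \<le> (B::nat)) \<Longrightarrow> sum_list (map f xs) \<le> length xs * B"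
  by (induction xs) (auto simp: add_mono)

lemma fecund_check_eq: "fecund_check gs =
   ((\<forall>i\<in>set [1..<length gs]. \<exists>j\<in>set [i + 1..<length gs + 1]. gs ! (j - 1) \<ge> gs ! (i - 1)),
    1 + sum_list (map (\<lambda>i. 2 + length [i + 1..<length gs + 1]) [1..<length gs]))"
  unfolding fecund_check_def Let_def fc_outer[unfolded Let_def] by simp

lemma fecund_cost: "L \<ge> 1 \<Longrightarrow> 1 + sum_list (map (\<lambda>i. 2 + length [i + 1..<L + 1]) [1..<L]) \<le> 4 * L * L"
proof -
  assume L: "L \<ge> 1"
  have "sum_list (map (\<lambda>i. 2 + length [i + 1..<L + 1]) [1..<L]) \<le> length [1..<L] * (L + 2)"
    by (rule sum_list_bound) auto
  also have "\<dots> \<le> L * (L + 2)" by (intro mult_le_mono1) simp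
  finally have "sum_list (map (\<lambda>i. 2 + length [i + 1..<L + 1]) [1..<L]) \<le> L * L + 2 * L"
    by (simp add: algebra_simps)
  moreover have "L \<le> L * L" using L by simp
  ultimately show ?thesis using L by linarith
qed

theorem theorem6:
  "\<exists>K::real. K > 0 \<and>
    (\<forall>(E :: nat \<Rightarrow> 'e list) (st :: 'e \<Rightarrow> nat) R C D (n::nat) (tR::nat) tC tD (m::nat) (L::nat).
      (\<forall>s. distinct (E s) \<and> length (E s) \<le> 2 ^ n \<and> (\<forall>e\<in>set (E s). st e = s)) \<and>
      (\<forall>e e'. R e e' \<longrightarrow> e \<in> set (E (st e)) \<and> e' \<in> set (E (Suc (st e))) \<and> st e' = Suc (st e)) \<and>
      (\<forall>e e1 e2. R e e1 \<and> R e e2 \<longrightarrow> e1 = e2) \<and>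
      (\<forall>e1 e2 e. R e1 e \<and> R e2 e \<longrightarrow> e1 = e2) \<and>
      (\<forall>e e'. C e e' \<longrightarrow> e \<in> set (E (st e)) \<and> e' \<in> set (E (Suc (st e))) \<and> st e' = Suc (st e)) \<and>
      (\<forall>e e'. D e e' \<longrightarrow> e \<in> set (E (st e)) \<and> e' \<in> set (E (st e')) \<and> st e < st e' \<and> \<not> R e e') \<and>
      1 \<le> tC \<and> 1 \<le> tD \<and> 1 \<le> tR \<and> 1 \<le> L
      \<longrightarrow>
      (let ((gs, b), steps) = observe_fecundity E R C D tR tC tD m L in
         gs = map (gen_size E R C D m) [1..<L + 1] \<and>
         b = fecund (gen_size E R C D m) L \<and>
         real steps \<le> K * real L * 2 ^ (2 * n) *
           Max {real tC, real tD, real tR, real L / 2 ^ (2 * n)}))"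
  proof (rule exI[of _ 100], intro conjI, simp, intro allI impI)
  fix E :: "nat \<Rightarrow> 'e list" and st :: "'e \<Rightarrow> nat" and R C D and n tR tC tD m L :: nat
  assume H: "(\<forall>s. distinct (E s) \<and> length (E s) \<le> 2 ^ n \<and> (\<forall>e\<in>set (E s). st e = s)) \<and>
      (\<forall>e e'. R e e' \<longrightarrow> e \<in> set (E (st e)) \<and> e' \<in> set (E (Suc (st e))) \<and> st e' = Suc (st e)) \<and>
      (\<forall>e e1 e2. R e e1 \<and> R e e2 \<longrightarrow> e1 = e2) \<and>
      (\<forall>e1 e2 e. R e1 e \<and> R e2 e \<longrightarrow> e1 = e2) \<and>
      (\<forall>e e'. C e e' \<longrightarrow> e \<in> set (E (st e)) \<and> e' \<in> set (E (Suc (st e))) \<and> st e' = Suc (st e)) \<and>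
      (\<forall>e e'. D e e' \<longrightarrow> e \<in> set (E (st e)) \<and> e' \<in> set (E (st e')) \<and> st e < st e' \<and> \<not> R e e') \<and>
      1 \<le> tC \<and> 1 \<le> tD \<and> 1 \<le> tR \<and> 1 \<le> L"
  then have dist: "\<And>s. distinct (E s)" and len: "\<And>s. length (E s) \<le> 2 ^ n"
    and t: "1 \<le> tC" "1 \<le> tD" "1 \<le> tR" and L1: "1 \<le> L" by auto
  define N :: nat where "N = 2 ^ n"
  define T where "T = tC + tD + tR"
  define cg where "cg i = count_gen R C D tR tC tD (E (m + i - 1)) (E (m + i))" for i
  define g where "g = gen_size E R C D m"
  have N1: "1 \<le> N" unfolding N_def by simp
  have T1: "1 \<le> T" unfolding T_def using t by simp
  have gs_eq: "gen_sizes E R C D tR tC tD m L =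
     (map (\<lambda>i. fst (cg i)) [1..<L + 1], 1 + sum_list (map (\<lambda>i. snd (cg i) + 1) [1..<L + 1]))"
    unfolding gen_sizes_def cg_def gen_fold by simp
  have fst_cg: "fst (cg i) = g i" if "1 \<le> i" for i
  proof -
    have s: "Suc (m + i - 1) = m + i" using that by simp
    have "{(p, c). repro_instance E R C D (m + i - 1) p c} =
      {(p, c). p \<in> set (E (m + i - 1)) \<and> c \<in> set (E (m + i)) \<and> C p c \<and> D p c \<and> \<not> (\<exists>e\<in>set (E (m + i - 1)). R e c)}"
      unfolding repro_instance_def s by simp
    then show ?thesis unfolding cg_def g_def gen_size_def count_gen_eq fst_conv
      using count_val[OF dist dist] by simp
  qed
  have snd_cg: "snd (cg i) \<le> 11 * (N * N * T)" for i
    unfolding cg_def count_gen_eq snd_conv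
    by (rule count_cost) (use len t in \<open>auto simp: N_def T_def\<close>)
  define gs where "gs = map (\<lambda>i. fst (cg i)) [1..<L + 1]"
  define k1 where "k1 = 1 + sum_list (map (\<lambda>i. snd (cg i) + 1) [1..<L + 1])"
  have gs_g: "gs = map g [1..<L + 1]" unfolding gs_def by (intro map_cong) (auto simp: fst_cg)
  have lgs: "length gs = L" unfolding gs_def by simp
  have gsnth: "gs ! (j - 1) = g j" if "1 \<le> j" "j \<le> L" for j
    proof -
    have "[1..<L + 1] ! (j - 1) = j" using that by (simp del: upt_Suc)
    then show ?thesis unfolding gs_g using that by (simp del: upt_Suc)
  qed
  have k1b: "k1 \<le> 1 + L * (11 * (N * N * T) + 1)"
  proof -
    have "sum_list (map (\<lambda>i. snd (cg i) + 1) [1..<L + 1]) \<le> length [1..<L + 1] * (11 * (N * N * T) + 1)"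
      by (rule sum_list_bound) (use snd_cg in auto)
    then show ?thesis unfolding k1_def by (simp del: upt_Suc)
  qed
  have NNT: "1 \<le> N * N * T" using N1 T1 by (simp add: one_le_mult_iff)
  have k1c: "k1 \<le> 13 * L * (N * N * T)"
  proof -
    have "1 + L * (11 * (N * N * T) + 1) = 1 + L + 11 * (L * (N * N * T))" by (simp add: algebra_simps)
    moreover have "L \<le> L * (N * N * T)" using NNT by simp
    moreover have "13 * L * (N * N * T) = 13 * (L * (N * N * T))" by simp
    ultimately show ?thesis using k1b L1 by linarith
  qed
  obtain b k2 where fc: "fecund_check gs = (b, k2)" by (cases "fecund_check gs")
  have k2b: "k2 \<le> 4 * L * L" using fc fecund_cost[OF L1] unfolding fecund_check_eq lgs by auto
  have bfec: "b = fecund g L"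
  proof -
    have "b = (\<forall>i\<in>set [1..<L]. \<exists>j\<in>set [i + 1..<L + 1]. gs ! (j - 1) \<ge> gs ! (i - 1))"
      using fc unfolding fecund_check_eq lgs by auto
    also have "\<dots> = fecund g L" unfolding fecund_def
    proof (intro iffI allI impI)
      fix i assume A: "\<forall>i\<in>set [1..<L]. \<exists>j\<in>set [i + 1..<L + 1]. gs ! (i - 1) \<le> gs ! (j - 1)"
        and i: "1 \<le> i \<and> i < L"
      have "i \<in> set [1..<L]" using i by (simp del: upt_Suc)
      then obtain j where j: "j \<in> set [i + 1..<L + 1]" "gs ! (i - 1) \<le> gs ! (j - 1)" using A by blast
      then have "i < j" "j \<le> L" by auto
      moreover have "g i \<le> g j" using j(2) gsnth[of i] gsnth[of j] i \<open>i < j\<close> \<open>j \<le> L\<close> by simp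
      ultimately show "\<exists>j. i < j \<and> j \<le> L \<and> g i \<le> g j" by blast
    next
      assume A: "\<forall>i. 1 \<le> i \<and> i < L \<longrightarrow> (\<exists>j. i < j \<and> j \<le> L \<and> g i \<le> g j)"
      show "\<forall>i\<in>set [1..<L]. \<exists>j\<in>set [i + 1..<L + 1]. gs ! (i - 1) \<le> gs ! (j - 1)"
      proof
        fix i assume "i \<in> set [1..<L]"
        then have i: "1 \<le> i" "i < L" by auto
        then obtain j where j: "i < j" "j \<le> L" "g i \<le> g j" using A by blast
        then have "gs ! (i - 1) \<le> gs ! (j - 1)" using gsnth[of i] gsnth[of j] i by simp
        moreover have "j \<in> set [i + 1..<L + 1]" using j by (simp del: upt_Suc)
        ultimately show "\<exists>j\<in>set [i + 1..<L + 1]. gs ! (i - 1) \<le> gs ! (j - 1)" by blast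
      qed
    qed
    finally show ?thesis .
  qed
  have obs: "observe_fecundity E R C D tR tC tD m L = ((gs, b), k1 + k2)"
    unfolding observe_fecundity_def gs_eq gs_def[symmetric] k1_def[symmetric] using fc by simp
  define M where "M = Max {real tC, real tD, real tR, real L / 2 ^ (2 * n)}"
  have NN: "(2::real) ^ (2 * n) = real (N * N)" proof -
    have "(2::real) ^ (2 * n) = 2 ^ n * 2 ^ n" by (simp only: mult_2 power_add)
    then show ?thesis unfolding N_def by simp
  qed
  have NNpos: "real (N * N) > 0" using N1 by simp
  have M1: "real tC \<le> M" "real tD \<le> M" "real tR \<le> M" "real L / real (N * N) \<le> M"
    unfolding M_def NN by (auto intro!: Max_ge)
  have MT: "real T \<le> 3 * M" unfolding T_def using M1 by simp
  have LL: "real L * real L = real L * real (N * N) * (real L / real (N * N))" using NNpos N1 by simp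
  have "real (k1 + k2) \<le> 13 * real L * real (N * N * T) + 4 * real L * real L"
  proof -
    have "real k1 \<le> real (13 * L * (N * N * T))" using k1c by (simp only: of_nat_le_iff)
    then have r1: "real k1 \<le> 13 * real L * real (N * N * T)" by simp
    have "real k2 \<le> real (4 * L * L)" using k2b by (simp only: of_nat_le_iff)
    then have r2: "real k2 \<le> 4 * real L * real L" by simp
    show ?thesis using r1 r2 by simp
  qed
  also have "\<dots> \<le> 13 * real L * real (N * N) * (3 * M) + 4 * real L * real (N * N) * M"
  proof -
    have a: "13 * real L * real (N * N * T) \<le> 13 * real L * real (N * N) * (3 * M)"
    proof -
      have p: "0 \<le> 13 * real L * real (N * N)" by simp
      have eq: "13 * real L * real (N * N * T) = 13 * real L * real (N * N) * real T" by simp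
      show ?thesis using mult_left_mono[OF MT p] eq by linarith
    qed
    have b: "4 * real L * real L \<le> 4 * real L * real (N * N) * M"
    proof -
      have p: "0 \<le> 4 * real L * real (N * N)" by simp
      have e1: "4 * real L * real L = 4 * real L * real (N * N) * (real L / real (N * N))"
        using LL by (simp only: mult.assoc)
      show ?thesis using mult_left_mono[OF M1(4) p] e1 by linarith
    qed
    show ?thesis using a b by linarith
  qed
  also have "\<dots> \<le> 100 * real L * 2 ^ (2 * n) * M"
  proof -
    have "0 \<le> M" using M1 by simp
    then show ?thesis unfolding NN using NNpos by (simp add: mult_right_mono)
  qed
  finally have "real (k1 + k2) \<le> 100 * real L * 2 ^ (2 * n) * M" .
  then show "let ((gs, b), steps) = observe_fecundity E R C D tR tC tD m L in
         gs = map (gen_size E R C D m) [1..<L + 1] \<and>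
         b = fecund (gen_size E R C D m) L \<and>
         real steps \<le> 100 * real L * 2 ^ (2 * n) *
           Max {real tC, real tD, real tR, real L / 2 ^ (2 * n)}"
    unfolding obs using gs_g bfec g_def M_def by simp
qed


end
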